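(* Let $\alpha'>0$, $\nu':=\nu(\alpha')$, $T:=T(\alpha')$, let $\delta\in(0,1)$ and $0<\Delta\le(1-\delta)/\nu'$. Then for all integers $t,m$ and reals $x$ with $T\le x\le m<t$: $$e^{\nu'm}+\tfrac{t-m}{\alpha'}e^{\nu'(m-T)}\le e^{\nu't},$$ $$e^{\nu'm}-e^{\nu'(x-\Delta)}+\delta\,\tfrac{t-m}{\alpha'}e^{\nu'x}\le e^{\nu't}.$$
   Context: For $\alpha>0$, let $T=T(\alpha)\in\mathbb N$ be the unique positive integer with $\frac{(T-1)^T}{T^{T-1}}<\alpha\le\frac{T^{T+1}}{(T+1)^T}$, and define $\nu(\alpha):=\frac1T\log\frac T\alpha$. (In the paper this is applied with $\alpha'=\alpha/(1+3\epsilon)$, $\delta=(1+2\epsilon)/(1+3\epsilon)$, $\Delta\le\epsilon/(\nu'(1+3\epsilon))$.) *)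

theory Defs
  imports Complex_Main
begin

definition T_of :: "real \<Rightarrow> nat" where
  "T_of \<alpha> = (THE T::nat. 1 \<le> T \<and>
       (real T - 1) ^ T / real T ^ (T - 1) < \<alpha> \<and>
       \<alpha> \<le> real T ^ (T + 1) / (real T + 1) ^ T)"

definition nu :: "real \<Rightarrow> real" where
  "nu \<alpha> = (1 / real (T_of \<alpha>)) * ln (real (T_of \<alpha>) / \<alpha>)"

end

theory Submission
  imports Defs
begin

definition ff :: "nat \<Rightarrow> real" where "ff T = real T ^ (T + 1) / (real T + 1) ^ T"

lemma ff_mono1: "ff T \<le> ff (Suc T)"
proof -
  have "(real T * (real T + 2)) ^ (T+1) \<le> ((real T + 1)^2) ^ (T+1)"
    by (rule power_mono) (auto simp: power2_eq_square algebra_simps)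
  hence "real T ^ (T+1) * (real T + 2) ^ (T+1) \<le> (real T + 1) ^ T * (real T + 1) ^ (T+2)"
  proof -
    have e1: "real T ^ (T+1) * (real T + 2) ^ (T+1) = (real T * (real T + 2)) ^ (T+1)" by (simp add: power_mult_distrib)
    have e2: "(real T + 1) ^ T * (real T + 1) ^ (T+2) = ((real T + 1)^2) ^ (T+1)"
    proof -
      have "(real T + 1) ^ T * (real T + 1) ^ (T+2) = (real T + 1) ^ (T + (T+2))" by (simp add: power_add)
      also have "T + (T+2) = 2 * (T+1)" by simp
      finally show ?thesis by (simp only: power_mult)
    qed
    show ?thesis unfolding e1 e2 by fact
  qed
  thus ?thesis unfolding ff_def
    by (simp add: divide_simps add_ac) (simp add: algebra_simps)
qed

lemma ff_mono: "m \<le> n \<Longrightarrow> ff m \<le> ff n"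
  by (induction n rule: dec_induct) (auto intro: order_trans ff_mono1)

lemma ff_big: "real T / exp 1 \<le> ff T"
proof (cases "T = 0")
  case True thus ?thesis by (simp add: ff_def)
next
  case False
  hence Tp: "real T > 0" by simp
  have "ln ((1 + 1/real T) ^ T) = real T * ln (1 + 1/real T)" by (simp add: ln_realpow)
  also have "\<dots> \<le> real T * (1/real T)" using Tp by (intro mult_left_mono ln_add_one_self_le_self) auto
  also have "\<dots> = 1" using Tp by simp
  finally have "(1 + 1/real T) ^ T \<le> exp 1"
    by (metis exp_ln exp_le_cancel_iff zero_less_power add_pos_pos zero_less_one Tp divide_pos_pos)
  moreover have "(1 + 1/real T) ^ T = (real T + 1)^T / real T ^ T" using Tp
    by (simp add: field_simps power_divide)
  ultimately have h: "(real T + 1)^T \<le> exp 1 * real T ^ T" using Tp by (simp add: divide_simps)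
  have "real T / exp 1 = real T ^ (T+1) / (exp 1 * real T ^ T)" using Tp by simp
  also have "\<dots> \<le> ff T" unfolding ff_def using h Tp
    by (intro divide_left_mono) auto
  finally show ?thesis .
qed

lemma ff_low: "T \<ge> 1 \<Longrightarrow> (real T - 1) ^ T / real T ^ (T - 1) = ff (T - 1)"
  by (cases T) (auto simp: ff_def add.commute)

lemma T_of_props:
  assumes "a > 0"
  shows "1 \<le> T_of a \<and> (real (T_of a) - 1) ^ (T_of a) / real (T_of a) ^ (T_of a - 1) < a \<and>
       a \<le> real (T_of a) ^ (T_of a + 1) / (real (T_of a) + 1) ^ (T_of a)"
proof -
  let ?P = "\<lambda>T::nat. 1 \<le> T \<and> (real T - 1) ^ T / real T ^ (T - 1) < a \<and>
       a \<le> real T ^ (T + 1) / (real T + 1) ^ T"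
  have P: "?P T \<longleftrightarrow> 1 \<le> T \<and> ff (T-1) < a \<and> a \<le> ff T" for T
    by (simp only: ff_def[symmetric]) (use ff_low[of T] in auto)
  obtain N :: nat where N: "real N > a * exp 1" using reals_Archimedean2 by blast
  have "a < real N / exp 1" using N by (simp add: field_simps)
  hence "a \<le> ff N" using ff_big[of N] by linarith
  define T where "T = (LEAST T. a \<le> ff T)"
  have T1: "a \<le> ff T" unfolding T_def by (rule LeastI) fact
  have "T \<noteq> 0"
  proof
    assume "T = 0"
    hence "ff T = 0" by (simp add: ff_def)
    thus False using T1 assms by simp
  qed
  have lt: "T - 1 < T" using \<open>T \<noteq> 0\<close> by simp
  have "\<not> a \<le> ff (T-1)" using not_less_Least[of "T-1" "\<lambda>T. a \<le> ff T"] lt unfolding T_def by blast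
  hence T2: "ff (T-1) < a" by simp
  have "1 \<le> T \<and> ff (T-1) < a \<and> a \<le> ff T" using T1 T2 \<open>T \<noteq> 0\<close> by linarith
  hence ex: "?P T" using P[of T] by blast
  have uniq: "S = T" if "?P S" for S
  proof -
    have S: "1 \<le> S" "ff (S-1) < a" "a \<le> ff S" using that P[of S] by blast+
    show ?thesis
    proof (rule ccontr)
      assume "S \<noteq> T"
      then consider "S < T" | "T < S" by linarith
      thus False
      proof cases
        case 1 thus False using ff_mono[of S "T-1"] S T2 by linarith
      next
        case 2 thus False using ff_mono[of T "S-1"] S T1 by linarith
      qed
    qed
  qed
  have "?P (THE T. ?P T)" by (rule theI[of ?P T, OF ex uniq])
  thus ?thesis unfolding T_of_def .
qed

theorem lemma11:
  fixes \<alpha>' \<delta> \<Delta> x :: real and t m :: int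
  assumes "\<alpha>' > 0"
    and "0 < \<delta>" and "\<delta> < 1"
    and "0 < \<Delta>" and "\<Delta> \<le> (1 - \<delta>) / nu \<alpha>'"
    and "real (T_of \<alpha>') \<le> x" and "x \<le> real_of_int m" and "m < t"
  shows "(exp (nu \<alpha>' * m) + (real_of_int (t - m) / \<alpha>') * exp (nu \<alpha>' * (m - real (T_of \<alpha>')))
           \<le> exp (nu \<alpha>' * t)) \<and>
         (exp (nu \<alpha>' * m) - exp (nu \<alpha>' * (x - \<Delta>)) + \<delta> * (real_of_int (t - m) / \<alpha>') * exp (nu \<alpha>' * x)
           \<le> exp (nu \<alpha>' * t))"
proof -
  let ?a = "\<alpha>'"
  define T where "T = T_of \<alpha>'"
  define \<nu> where "\<nu> = nu \<alpha>'"
  have a0: "?a > 0" by fact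
  have TP: "1 \<le> T" "(real T - 1) ^ T / real T ^ (T - 1) < ?a" "?a \<le> real T ^ (T + 1) / (real T + 1) ^ T"
    using T_of_props[OF a0] unfolding T_def by auto
  have Tp: "real T > 0" using TP(1) by simp
  have nuT: "\<nu> * real T = ln (real T / ?a)" unfolding \<nu>_def nu_def T_def[symmetric] using Tp by simp
  have eT: "exp (\<nu> * real T) = real T / ?a" using nuT Tp a0 by simp
  have epow: "exp \<nu> ^ T = real T / ?a" using eT by (simp add: exp_of_nat_mult[symmetric] mult.commute)
  have "((real T + 1) / real T) ^ T = (real T + 1)^T / real T ^ T" by (simp add: power_divide)
  also have "\<dots> \<le> real T / ?a"
  proof -
    have "?a * (real T + 1)^T \<le> real T ^ (T+1)" using TP(3) by (simp add: field_simps)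
    thus ?thesis using a0 Tp by (simp add: field_simps)
  qed
  finally have "((real T + 1) / real T) ^ T \<le> exp \<nu> ^ T" using epow by simp
  moreover obtain n where Tn: "T = Suc n" using TP(1) by (cases T) auto
  ultimately have eup: "(real T + 1) / real T \<le> exp \<nu>"
    using power_le_imp_le_base[of "(real T + 1) / real T" n "exp \<nu>"] by simp
  have edown: "exp \<nu> \<le> real T / (real T - 1)" if T2: "T \<ge> 2"
  proof -
    have Tm: "real T - 1 > 0" using T2 by simp
    have "real T / ?a < real T ^ T / (real T - 1) ^ T"
    proof -
      have "(real T - 1) ^ T < ?a * real T ^ (T - 1)" using TP(2) Tp by (simp add: field_simps)
      hence "(real T - 1) ^ T * real T < ?a * (real T ^ (T - 1) * real T)" using Tp
        by (simp add: algebra_simps)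
      also have "real T ^ (T - 1) * real T = real T ^ T"
        unfolding Tn by simp
      finally show ?thesis using a0 Tm by (simp add: field_simps)
    qed
    also have "\<dots> = (real T / (real T - 1)) ^ T" by (simp add: power_divide)
    finally have "exp \<nu> ^ T < (real T / (real T - 1)) ^ T" using epow by simp
    hence "exp \<nu> < real T / (real T - 1)"
      by (rule power_less_imp_less_base) (use Tm in auto)
    thus ?thesis by simp
  qed
  have nupos: "\<nu> > 0"
  proof -
    have "1 < (real T + 1) / real T" using Tp by simp
    hence "1 < exp \<nu>" using eup by linarith
    thus ?thesis by simp
  qed
  have bern: "exp (\<nu> * real k) \<ge> 1 + real k / real T" for k :: nat
  proof -
    have "1 + real k / real T \<le> (1 + 1 / real T) ^ k"
    proof -
      have "0 \<le> 1 / real T" by simp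
      hence h0: "-1 \<le> 1 / real T" by linarith
      show ?thesis using Bernoulli_inequality[OF h0, of k] by simp
    qed
    also have "\<dots> \<le> exp \<nu> ^ k" using eup Tp by (intro power_mono) (auto simp: field_simps)
    also have "\<dots> = exp (\<nu> * real k)" by (simp add: exp_of_nat_mult[symmetric] mult.commute)
    finally show ?thesis .
  qed
  have up: "exp (\<nu> * real (T + n)) \<ge> real (T + n) / ?a" for n
  proof (induction n)
    case 0 thus ?case using eT by simp
  next
    case (Suc n)
    have "real (T + Suc n) / ?a \<le> (real T + 1) / real T * (real (T + n) / ?a)"
      using Tp a0 by (simp add: field_simps)
    also have "\<dots> \<le> exp \<nu> * exp (\<nu> * real (T + n))"
      using eup Suc Tp a0 by (intro mult_mono) auto
    also have "\<dots> = exp (\<nu> * real (T + Suc n))" by (simp add: exp_add[symmetric] algebra_simps)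
    finally show ?case .
  qed
  have down: "n < T \<Longrightarrow> exp (\<nu> * real (T - n)) \<ge> real (T - n) / ?a" for n
  proof (induction n)
    case 0 thus ?case using eT by simp
  next
    case (Suc n)
    hence T2: "T \<ge> 2" by simp
    have Tm: "real T - 1 > 0" using T2 by simp
    have IH: "exp (\<nu> * real (T - n)) \<ge> real (T - n) / ?a" using Suc by simp
    have rn: "real (T - n) = real T - real n" "real (T - Suc n) = real T - real n - 1" using Suc by auto
    have "real (T - Suc n) / ?a \<le> (real T - 1) / real T * (real (T - n) / ?a)"
      using Tp a0 Tm unfolding rn by (simp add: field_simps)
    also have "\<dots> \<le> exp (\<nu> * real (T - n)) / exp \<nu>"
    proof -
      have "(real T - 1) / real T \<le> 1 / exp \<nu>" using edown[OF T2] Tm Tp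
        by (simp add: field_simps)
      moreover have "0 \<le> real (T - n) / ?a" using a0 by simp
      ultimately have "(real T - 1) / real T * (real (T - n) / ?a) \<le> 1 / exp \<nu> * exp (\<nu> * real (T - n))"
        using IH Tm Tp by (intro mult_mono) auto
      thus ?thesis by simp
    qed
    also have "\<dots> = exp (\<nu> * real (T - Suc n))"
      using rn by (simp add: exp_diff[symmetric] algebra_simps)
    finally show ?case .
  qed
  have key: "exp (\<nu> * real k) \<ge> real k / ?a" if "k \<ge> 1" for k :: nat
  proof (cases "k \<ge> T")
    case True thus ?thesis using up[of "k - T"] by simp
  next
    case False thus ?thesis using down[of "T - k"] that by simp
  qed
  define k where "k = nat (t - m)"
  have k1: "k \<ge> 1" and kk: "real_of_int (t - m) = real k" using assms(8) unfolding k_def by auto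
  have tm: "real_of_int t = real_of_int m + real k" using kk by simp
  define M where "M = exp (\<nu> * m)"
  define K where "K = exp (\<nu> * real k)"
  define X where "X = exp (\<nu> * x)"
  have Mp: "M > 0" and Xp: "X > 0" unfolding M_def X_def by auto
  have et: "exp (\<nu> * t) = M * K" unfolding M_def K_def tm by (simp add: exp_add[symmetric] algebra_simps)
  have K1: "K \<ge> 1" using bern[of k] Tp unfolding K_def by (smt (verit) divide_nonneg_nonneg of_nat_0_le_iff)
  have Kk: "K \<ge> real k / ?a" using key[OF k1] unfolding K_def .
  have Kb: "K \<ge> 1 + real k / real T" using bern[of k] unfolding K_def .
  have XM: "X \<le> M" unfolding X_def M_def using nupos assms(7) by simp
  have first: "exp (\<nu> * m) + (real_of_int (t - m) / \<alpha>') * exp (\<nu> * (m - real T)) \<le> exp (\<nu> * t)"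
  proof -
    have "exp (\<nu> * (m - real T)) = M * (?a / real T)"
      unfolding M_def using eT by (simp add: right_diff_distrib exp_diff)
    hence "exp (\<nu> * m) + (real_of_int (t - m) / \<alpha>') * exp (\<nu> * (m - real T)) = M * (1 + real k / real T)"
      unfolding kk M_def using a0 Tp by (simp add: field_simps)
    also have "\<dots> \<le> M * K" using Kb Mp by simp
    finally show ?thesis using et by simp
  qed
  have E: "exp (- (\<nu> * \<Delta>)) \<ge> \<delta>"
  proof -
    have "\<nu> * \<Delta> \<le> 1 - \<delta>" using assms(5) nupos unfolding \<nu>_def[symmetric] by (simp add: field_simps)
    moreover have "exp (- (\<nu> * \<Delta>)) \<ge> 1 - \<nu> * \<Delta>" using exp_ge_add_one_self[of "- (\<nu> * \<Delta>)"] by simp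
    ultimately show ?thesis by linarith
  qed
  have eX: "exp (\<nu> * (x - \<Delta>)) = X * exp (- (\<nu> * \<Delta>))" unfolding X_def
    by (simp add: exp_add[symmetric] algebra_simps)
  have second: "exp (\<nu> * m) - exp (\<nu> * (x - \<Delta>)) + \<delta> * (real_of_int (t - m) / \<alpha>') * exp (\<nu> * x) \<le> exp (\<nu> * t)"
  proof -
    have d: "K - 1 \<ge> \<delta> * (real k / ?a - 1)"
    proof (cases "real k / ?a \<ge> 1")
      case True
      hence "\<delta> * (real k / ?a - 1) \<le> 1 * (real k / ?a - 1)" using assms(3) by (intro mult_right_mono) auto
      hence "\<delta> * (real k / ?a - 1) \<le> real k / ?a - 1" by simp
      thus ?thesis using Kk by linarith
    next
      case False
      hence "\<delta> * (real k / ?a - 1) \<le> 0" using assms(2) by (simp add: mult_nonneg_nonpos)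
      thus ?thesis using K1 by linarith
    qed
    have "M * (K - 1) \<ge> X * (K - 1)" using XM K1 by (intro mult_right_mono) auto
    moreover have "X * (K - 1) \<ge> X * (\<delta> * (real k / ?a - 1))" using d Xp by (intro mult_left_mono) auto
    moreover have "X * exp (- (\<nu> * \<Delta>)) \<ge> X * \<delta>" using E Xp by (intro mult_left_mono) auto
    ultimately have "M - X * exp (- (\<nu> * \<Delta>)) + \<delta> * (real k / ?a) * X \<le> M * K"
      by (simp add: algebra_simps)
    thus ?thesis unfolding eX kk et[symmetric] M_def[symmetric] X_def[symmetric] by simp
  qed
  show ?thesis using first second unfolding \<nu>_def T_def by simp
qed

end
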